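(* For every odd positive integer $N$, the sandpile group $G_{\Gamma_N}$ on an $N\times N$ square domain $\Gamma_N\subset\mathbb{Z}^2$ has a cyclic subgroup isomorphic to $\mathbb{Z}/\tfrac{N+1}{2}\mathbb{Z}$, of order $\tfrac{N+1}{2}$.
   Context: An $N\times N$ square domain is a set $\{a,\dots,a+N-1\}\times\{b,\dots,b+N-1\}\subset\mathbb{Z}^2$. For finite $\Gamma\subset\mathbb{Z}^2$, the reduced Laplacian is $(\Delta_\Gamma f)(v)=\sum_{w\in\Gamma,\,w\sim v}f(w)-4f(v)$ (nearest-neighbor adjacency in $\mathbb{Z}^2$; all vertices outside $\Gamma$ are contracted to a sink), and the sandpile group is $G_\Gamma=\mathbb{Z}^\Gamma/\Delta_\Gamma(\mathbb{Z}^\Gamma)$. *)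

theory Defs
  imports "HOL-Algebra.Algebra"
begin

definition square_domain :: "int \<Rightarrow> int \<Rightarrow> nat \<Rightarrow> (int \<times> int) set" where
  "square_domain a b N = {a..a + int N - 1} \<times> {b..b + int N - 1}"

definition adj :: "int \<times> int \<Rightarrow> int \<times> int \<Rightarrow> bool" where
  "adj v w \<longleftrightarrow> \<bar>fst v - fst w\<bar> + \<bar>snd v - snd w\<bar> = 1"

text \<open>The free abelian group Z^Gamma: integer functions supported on Gamma,
  with pointwise addition (written multiplicatively, as HOL-Algebra requires).\<close>
definition ZGamma :: "(int \<times> int) set \<Rightarrow> ((int \<times> int) \<Rightarrow> int) monoid" where
  "ZGamma \<Gamma> = \<lparr> carrier = {f. \<forall>v. v \<notin> \<Gamma> \<longrightarrow> f v = 0},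
                  monoid.mult = (\<lambda>f g v. f v + g v),
                  monoid.one = (\<lambda>v. 0) \<rparr>"

text \<open>Reduced Laplacian (vertices outside Gamma are contracted into the sink).\<close>
definition reduced_laplacian :: "(int \<times> int) set \<Rightarrow> ((int \<times> int) \<Rightarrow> int) \<Rightarrow> (int \<times> int) \<Rightarrow> int" where
  "reduced_laplacian \<Gamma> f v =
     (if v \<in> \<Gamma> then (\<Sum>w\<in>{w\<in>\<Gamma>. adj w v}. f w) - 4 * f v else 0)"

definition sandpile_group :: "(int \<times> int) set \<Rightarrow> ((int \<times> int) \<Rightarrow> int) set monoid" where
  "sandpile_group \<Gamma> = ZGamma \<Gamma> Mod (reduced_laplacian \<Gamma> ` carrier (ZGamma \<Gamma>))"

end

theory Submission
  imports Defs "Jordan_Normal_Form.Determinant"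
begin

abbreviation L where "L \<equiv> reduced_laplacian"

definition dlt :: "int \<times> int \<Rightarrow> int \<times> int \<Rightarrow> int" where
  "dlt u = (\<lambda>v. if v = u then 1 else 0)"

lemma adj_iff: "adj w v \<longleftrightarrow> w \<in> {(fst v+1, snd v), (fst v-1, snd v), (fst v, snd v+1), (fst v, snd v-1)}"
  by (cases w, cases v) (auto simp: adj_def abs_if split: if_splits)

lemma adj_sym: "adj w v = adj v w"
  by (auto simp: adj_def abs_minus_commute)

lemma L_add: "L G (\<lambda>v. f v + g v) v = L G f v + L G g v"
  by (simp add: reduced_laplacian_def sum.distrib algebra_simps)

lemma L_smult: "L G (\<lambda>v. k * f v) v = k * L G f v"
  by (simp add: reduced_laplacian_def sum_distrib_left algebra_simps)

lemma L_zero: "L G (\<lambda>v. 0) v = 0"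
  by (simp add: reduced_laplacian_def)

lemma L_sum: "finite S \<Longrightarrow> L G (\<lambda>v. \<Sum>u\<in>S. h u v) v = (\<Sum>u\<in>S. L G (h u) v)"
proof (induction S rule: finite_induct)
  case empty then show ?case by (simp add: L_zero)
next
  case (insert x S)
  then show ?case by (simp add: L_add)
qed

lemma decomp:
  assumes "finite G" "\<forall>v. v \<notin> G \<longrightarrow> f v = 0"
  shows "f = (\<lambda>v. \<Sum>u\<in>G. f u * dlt u v)"
proof
  fix v
  have "(\<Sum>u\<in>G. f u * dlt u v) = (\<Sum>u\<in>G. if v = u then f u else 0)"
    by (rule sum.cong) (auto simp: dlt_def)
  also have "\<dots> = (if v \<in> G then f v else 0)" using assms(1) by (simp add: sum.delta)
  moreover have "f v = (if v \<in> G then f v else 0)" using assms(2) by metis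
  ultimately show "f v = (\<Sum>u\<in>G. f u * dlt u v)" by simp
qed

lemma L_expand:
  assumes "finite G" "\<forall>v. v \<notin> G \<longrightarrow> f v = 0"
  shows "L G f v = (\<Sum>u\<in>G. f u * L G (dlt u) v)"
proof -
  have "L G f v = L G (\<lambda>v. \<Sum>u\<in>G. f u * dlt u v) v" using decomp[OF assms] by metis
  also have "\<dots> = (\<Sum>u\<in>G. L G (\<lambda>v. f u * dlt u v) v)" using assms(1) by (rule L_sum)
  also have "\<dots> = (\<Sum>u\<in>G. f u * L G (dlt u) v)" by (simp add: L_smult)
  finally show ?thesis .
qed

lemma L_dlt:
  assumes "finite G" "u \<in> G" "v \<in> G"
  shows "L G (dlt u) v = (if adj u v then 1 else 0) - 4 * (if v = u then 1 else 0)"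
proof -
  have "(\<Sum>w\<in>{w\<in>G. adj w v}. dlt u w) = (\<Sum>w\<in>{w\<in>G. adj w v}. if u = w then 1 else 0)"
    by (rule sum.cong) (auto simp: dlt_def)
  also have "\<dots> = (if adj u v then 1 else 0)" using assms by (simp add: sum.delta)
  finally show ?thesis using assms by (simp add: reduced_laplacian_def dlt_def)
qed

lemma maxstep:
  assumes "finite G" "\<forall>w\<in>G. g w \<le> M" "0 < M" "v \<in> G" "g v = M" "L G g v = 0"
  shows "(fst v + 1, snd v) \<in> G \<and> g (fst v + 1, snd v) = M"
proof -
  define S where "S = {w\<in>G. adj w v}"
  define p where "p = (fst v + 1, snd v)"
  define Q where "Q = {(fst v-1, snd v), (fst v, snd v+1), (fst v, snd v-1)}"
  have SQ: "S \<subseteq> insert p Q" by (auto simp: S_def p_def Q_def adj_iff)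
  have fS: "finite S" using assms(1) by (simp add: S_def)
  have sumS: "sum g S = 4 * M" using assms(5,6,4) by (simp add: reduced_laplacian_def S_def)
  have cQ: "card Q \<le> 3" unfolding Q_def by (rule order.trans[OF card_insert_le_m1]) (auto intro: order.trans[OF card_insert_le_m1])
  have bnd: "sum g (S - {p}) \<le> 3 * M"
  proof -
    have "S - {p} \<subseteq> Q" using SQ by auto
    then have c: "card (S - {p}) \<le> 3" using cQ card_mono[of Q "S - {p}"] by (auto simp: Q_def)
    have "sum g (S - {p}) \<le> of_nat (card (S - {p})) * M"
      by (rule sum_bounded_above) (use assms(2) S_def in auto)
    moreover have "of_nat (card (S - {p})) * M \<le> 3 * M" using c assms(3) by (simp add: mult_right_mono)
    ultimately show ?thesis by linarith
  qed
  have pS: "p \<in> S"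
  proof (rule ccontr)
    assume "p \<notin> S"
    then have "S - {p} = S" by auto
    then show False using bnd sumS assms(3) by simp
  qed
  have "sum g S = g p + sum g (S - {p})" using pS fS by (simp add: sum.remove)
  then have "g p \<ge> M" using bnd sumS by simp
  moreover have "g p \<le> M" using pS assms(2) by (auto simp: S_def)
  ultimately show ?thesis using pS by (auto simp: S_def p_def)
qed

lemma maxprinciple:
  assumes "finite G" "\<forall>v. v \<notin> G \<longrightarrow> f v = 0" "\<forall>v\<in>G. L G f v = 0"
  shows "f = (\<lambda>v. 0)"
proof (rule ccontr)
  assume "f \<noteq> (\<lambda>v. 0)"
  then have "\<exists>v1. f v1 \<noteq> 0" by (rule contrapos_np) (rule ext, blast)
  then obtain v1 where v1: "f v1 \<noteq> 0" by blast
  then have v1G: "v1 \<in> G" using assms(2) by metis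
  obtain g where gdef: "g = f \<or> g = (\<lambda>v. (-1) * f v)" and gv1: "g v1 > 0"
  proof (cases "f v1 > 0")
    case True then show ?thesis using that[of f] by auto
  next
    case False then show ?thesis using that[of "\<lambda>v. (-1) * f v"] v1 by auto
  qed
  have Lg: "\<forall>v\<in>G. L G g v = 0"
  proof
    fix v assume vG: "v \<in> G"
    show "L G g v = 0"
      using gdef
    proof
      assume "g = f" then show ?thesis using assms(3) vG by simp
    next
      assume g: "g = (\<lambda>v. (-1) * f v)"
      have "L G (\<lambda>v. (-1) * f v) v = (-1) * L G f v" by (rule L_smult)
      then show ?thesis using g assms(3) vG by simp
    qed
  qed
  define M where "M = Max (g ` G)"
  have geM: "\<forall>w\<in>G. g w \<le> M" using assms(1) by (auto simp: M_def)
  have Mpos: "M > 0" using geM v1G gv1 by force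
  have "M \<in> g ` G" unfolding M_def using assms(1) v1G by (intro Max_in) auto
  then obtain v0 where v0: "v0 \<in> G" "g v0 = M" by auto
  have all: "(fst v0 + int k, snd v0) \<in> G \<and> g (fst v0 + int k, snd v0) = M" for k
  proof (induction k)
    case 0 then show ?case using v0 by simp
  next
    case (Suc k)
    have "(fst (fst v0 + int k, snd v0) + 1, snd (fst v0 + int k, snd v0)) \<in> G \<and>
          g (fst (fst v0 + int k, snd v0) + 1, snd (fst v0 + int k, snd v0)) = M"
      by (rule maxstep[OF assms(1) geM Mpos]) (use Suc Lg in auto)
    then have "(fst v0 + int k + 1, snd v0) \<in> G \<and> g (fst v0 + int k + 1, snd v0) = M" by simp
    moreover have e: "(fst v0 + int k + 1, snd v0) = (fst v0 + int (Suc k), snd v0)" by simp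
    ultimately show ?case by (simp only: e)
  qed
  have "inj (\<lambda>k::nat. (fst v0 + int k, snd v0))" by (auto simp: inj_def)
  then have "infinite (range (\<lambda>k::nat. (fst v0 + int k, snd v0)))" by (rule range_inj_infinite)
  moreover have "range (\<lambda>k::nat. (fst v0 + int k, snd v0)) \<subseteq> G" using all by blast
  ultimately show False using assms(1) finite_subset by blast
qed

lemma exists_D:
  assumes "finite G" "p \<in> G"
  shows "\<exists>D g. D > 0 \<and> (\<forall>v. v \<notin> G \<longrightarrow> g v = 0) \<and> L G g = (\<lambda>q. D * dlt p q)"
proof -
  define n where "n = card G"
  obtain e where e: "bij_betw e {0..<n} G" using ex_bij_betw_nat_finite[OF assms(1)] n_def by blast
  define A :: "int mat" where "A = mat n n (\<lambda>(k,l). L G (dlt (e l)) (e k))"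
  have A: "A \<in> carrier_mat n n" by (simp add: A_def)
  define F where "F v = (\<lambda>q. if q \<in> G then v $ (inv_into {0..<n} e q) else 0)" for v :: "int vec"
  have Fsupp: "\<forall>q. q \<notin> G \<longrightarrow> F v q = 0" for v by (simp add: F_def)
  have eG: "l < n \<Longrightarrow> e l \<in> G" for l using e by (auto dest: bij_betwE)
  have invE: "l < n \<Longrightarrow> inv_into {0..<n} e (e l) = l" for l
    using e by (simp add: bij_betw_def inv_into_f_f)
  have Fe: "l < n \<Longrightarrow> F v (e l) = v $ l" for v l by (simp add: F_def eG invE)
  have LF: "L G (F v) (e k) = (A *\<^sub>v v) $ k" if v: "v \<in> carrier_vec n" and k: "k < n" for v k
  proof -
    have "L G (F v) (e k) = (\<Sum>u\<in>G. F v u * L G (dlt u) (e k))"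
      by (rule L_expand[OF assms(1) Fsupp])
    also have "\<dots> = (\<Sum>l\<in>{0..<n}. F v (e l) * L G (dlt (e l)) (e k))"
      by (rule sum.reindex_bij_betw[OF e, symmetric])
    also have "\<dots> = (\<Sum>l\<in>{0..<n}. row A k $ l * v $ l)"
      by (rule sum.cong) (use k in \<open>auto simp: Fe A_def\<close>)
    also have "\<dots> = (A *\<^sub>v v) $ k" using v k A by (simp add: scalar_prod_def)
    finally show ?thesis .
  qed
  have inj: "v = 0\<^sub>v n" if v: "v \<in> carrier_vec n" and Av: "A *\<^sub>v v = 0\<^sub>v n" for v
  proof -
    have "\<forall>q\<in>G. L G (F v) q = 0"
    proof
      fix q assume "q \<in> G"
      then obtain k where k: "k < n" "q = e k" using e by (auto simp: bij_betw_def)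
      show "L G (F v) q = 0" using LF[OF v k(1)] Av k by simp
    qed
    then have "F v = (\<lambda>q. 0)" by (intro maxprinciple[OF assms(1) Fsupp])
    then have "\<forall>l<n. v $ l = 0" using Fe by (metis)
    then show ?thesis using v by (intro eq_vecI) auto
  qed
  have detA: "det A \<noteq> 0"
    using det_0_iff_vec_prod_zero[OF A] inj by blast
  define j0 where "j0 = inv_into {0..<n} e p"
  have j0: "j0 < n" "e j0 = p" using e assms(2) unfolding j0_def
    by (auto simp: bij_betw_def inv_into_into f_inv_into_f)
  define w where "w = col (adj_mat A) j0"
  have adjA: "adj_mat A \<in> carrier_mat n n" using adj_mat(1)[OF A] .
  have w: "w \<in> carrier_vec n" using adjA j0 by (simp add: w_def)
  have Aw: "(A *\<^sub>v w) $ k = det A * (if k = j0 then 1 else 0)" if k: "k < n" for k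
  proof -
    have "(A *\<^sub>v w) $ k = (A * adj_mat A) $$ (k, j0)"
      using k j0 A adjA by (simp add: w_def)
    also have "\<dots> = (det A \<cdot>\<^sub>m 1\<^sub>m n) $$ (k, j0)" using adj_mat(2)[OF A] by simp
    also have "\<dots> = det A * (if k = j0 then 1 else 0)" using k j0 by simp
    finally show ?thesis .
  qed
  have LFw: "L G (F w) = (\<lambda>q. det A * dlt p q)"
  proof
    fix q
    show "L G (F w) q = det A * dlt p q"
    proof (cases "q \<in> G")
      case True
      then obtain k where k: "k < n" "q = e k" using e by (auto simp: bij_betw_def)
      have "(e k = p) = (k = j0)" using e k j0 by (auto simp: bij_betw_def inj_on_def)
      then show ?thesis using LF[OF w k(1)] Aw[OF k(1)] k by (simp add: dlt_def)
    next
      case False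
      then show ?thesis using assms(2) by (auto simp: reduced_laplacian_def dlt_def)
    qed
  qed
  show ?thesis
  proof (cases "det A > 0")
    case True
    show ?thesis
      by (rule exI[of _ "det A"], rule exI[of _ "F w"]) (use True LFw Fsupp in simp)
  next
    case False
    then have "- det A > 0" using detA by simp
    moreover have "L G (\<lambda>v. (-1) * F w v) = (\<lambda>q. (- det A) * dlt p q)"
    proof
      fix q
      have "L G (\<lambda>v. (-1) * F w v) q = (-1) * L G (F w) q" by (rule L_smult)
      then show "L G (\<lambda>v. (-1) * F w v) q = (- det A) * dlt p q" using LFw by simp
    qed
    moreover have "\<forall>v. v \<notin> G \<longrightarrow> (-1) * F w v = 0" using Fsupp by simp
    ultimately show ?thesis
      by (intro exI[of _ "- det A"] exI[of _ "\<lambda>v. (-1) * F w v"] conjI)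
  qed
qed


definition cfun :: "int \<Rightarrow> int \<Rightarrow> int \<times> int \<Rightarrow> int" where
  "cfun a b v = (fst v - a + 1) * (snd v - b + 1)"

lemma nb_set: "{w. adj w u} = {(fst u+1, snd u), (fst u-1, snd u), (fst u, snd u+1), (fst u, snd u-1)}"
  using adj_iff by blast

lemma finite_square: "finite (square_domain a b N)"
  by (simp add: square_domain_def)

lemma Lc_dvd:
  fixes m :: int
  assumes m: "int N + 1 = 2 * m" and u: "u \<in> square_domain a b N"
  shows "m dvd L (square_domain a b N) (cfun a b) u"
proof -
  let ?G = "square_domain a b N"
  define Nb where "Nb = {(fst u+1, snd u), (fst u-1, snd u), (fst u, snd u+1), (fst u, snd u-1)}"
  have fN: "finite Nb" by (simp add: Nb_def)
  have S: "{w\<in>?G. adj w u} = Nb \<inter> ?G" using nb_set Nb_def by blast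
  obtain x y where xy: "u = (x, y)" by (cases u)
  have sumNb: "sum (cfun a b) Nb = 4 * cfun a b u"
  proof -
    have "sum (cfun a b) Nb = cfun a b (x+1,y) + cfun a b (x-1,y) + cfun a b (x,y+1) + cfun a b (x,y-1)"
      by (simp add: Nb_def xy)
    also have "\<dots> = 4 * cfun a b u" by (simp add: cfun_def xy algebra_simps)
    finally show ?thesis .
  qed
  have split: "sum (cfun a b) Nb = sum (cfun a b) (Nb \<inter> ?G) + sum (cfun a b) (Nb - ?G)"
    using fN by (rule sum.Int_Diff)
  have ux: "a \<le> x" "x \<le> a + int N - 1" "b \<le> y" "y \<le> b + int N - 1"
    using u by (auto simp: square_domain_def xy)
  have out: "m dvd cfun a b w" if w: "w \<in> Nb - ?G" for w
  proof -
    have wN: "w = (x+1,y) \<or> w = (x-1,y) \<or> w = (x,y+1) \<or> w = (x,y-1)"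
      using w by (simp add: Nb_def xy)
    have wG: "\<not> (a \<le> fst w \<and> fst w \<le> a + int N - 1 \<and> b \<le> snd w \<and> snd w \<le> b + int N - 1)"
      using w by (cases w) (simp add: square_domain_def)
    have "fst w - a + 1 = 0 \<or> fst w - a + 1 = 2 * m \<or> snd w - b + 1 = 0 \<or> snd w - b + 1 = 2 * m"
      using wN wG ux m by auto
    then show ?thesis
    proof (elim disjE)
      assume h: "fst w - a + 1 = 0" show ?thesis by (simp add: cfun_def h)
    next
      assume h: "fst w - a + 1 = 2 * m"
      have "cfun a b w = m * (2 * (snd w - b + 1))" by (simp add: cfun_def h)
      then show ?thesis by simp
    next
      assume h: "snd w - b + 1 = 0" show ?thesis by (simp add: cfun_def h)
    next
      assume h: "snd w - b + 1 = 2 * m"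
      have "cfun a b w = m * (2 * (fst w - a + 1))" by (simp add: cfun_def h)
      then show ?thesis by simp
    qed
  qed
  have "L ?G (cfun a b) u = sum (cfun a b) (Nb \<inter> ?G) - 4 * cfun a b u"
    using u S by (simp add: reduced_laplacian_def)
  also have "\<dots> = - sum (cfun a b) (Nb - ?G)" using split sumNb by simp
  finally have eq: "L ?G (cfun a b) u = - sum (cfun a b) (Nb - ?G)" .
  have "m dvd sum (cfun a b) (Nb - ?G)" by (rule dvd_sum) (use out in blast)
  then show ?thesis using eq by simp
qed

lemma functional_dvd:
  fixes m :: int
  assumes m: "int N + 1 = 2 * m" and g: "\<forall>v. v \<notin> square_domain a b N \<longrightarrow> g v = 0"
  shows "m dvd (\<Sum>v\<in>square_domain a b N. cfun a b v * L (square_domain a b N) g v)"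
proof -
  let ?G = "square_domain a b N"
  have fG: "finite ?G" by (rule finite_square)
  have "(\<Sum>v\<in>?G. cfun a b v * L ?G g v) = (\<Sum>v\<in>?G. cfun a b v * (\<Sum>u\<in>?G. g u * L ?G (dlt u) v))"
    using L_expand[OF fG g] by simp
  also have "\<dots> = (\<Sum>v\<in>?G. \<Sum>u\<in>?G. g u * (cfun a b v * L ?G (dlt u) v))"
    by (simp add: sum_distrib_left algebra_simps)
  also have "\<dots> = (\<Sum>u\<in>?G. \<Sum>v\<in>?G. g u * (cfun a b v * L ?G (dlt u) v))"
    by (rule sum.swap)
  also have "\<dots> = (\<Sum>u\<in>?G. g u * L ?G (cfun a b) u)"
  proof (rule sum.cong[OF refl])
    fix u assume u: "u \<in> ?G"
    have "(\<Sum>v\<in>?G. cfun a b v * L ?G (dlt u) v)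
        = (\<Sum>v\<in>?G. (if adj v u then cfun a b v else 0) - (if u = v then 4 * cfun a b v else 0))"
      by (rule sum.cong[OF refl]) (use u fG in \<open>auto simp: L_dlt adj_sym\<close>)
    also have "\<dots> = (\<Sum>v\<in>?G. if adj v u then cfun a b v else 0) - 4 * cfun a b u"
      using u fG by (simp add: sum_subtractf sum.delta)
    also have "\<dots> = L ?G (cfun a b) u"
      using u fG by (simp add: reduced_laplacian_def sum.inter_filter)
    finally show "(\<Sum>v\<in>?G. g u * (cfun a b v * L ?G (dlt u) v)) = g u * L ?G (cfun a b) u"
      by (simp add: sum_distrib_left[symmetric])
  qed
  finally show ?thesis using Lc_dvd[OF m] by (simp add: dvd_sum)
qed


lemma ZGamma_comm_group: "comm_group (ZGamma G)"
proof (rule comm_groupI)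
  fix x assume "x \<in> carrier (ZGamma G)"
  then show "\<exists>y\<in>carrier (ZGamma G). y \<otimes>\<^bsub>ZGamma G\<^esub> x = \<one>\<^bsub>ZGamma G\<^esub>"
    by (intro bexI[of _ "\<lambda>v. - x v"]) (auto simp: ZGamma_def)
qed (auto simp: ZGamma_def)

lemma L_hom: "L G \<in> hom (ZGamma G) (ZGamma G)"
  unfolding hom_def
proof (intro CollectI conjI ballI)
  show "L G \<in> carrier (ZGamma G) \<rightarrow> carrier (ZGamma G)"
    by (auto simp: ZGamma_def reduced_laplacian_def)
  fix f g assume "f \<in> carrier (ZGamma G)" "g \<in> carrier (ZGamma G)"
  show "L G (f \<otimes>\<^bsub>ZGamma G\<^esub> g) = L G f \<otimes>\<^bsub>ZGamma G\<^esub> L G g"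
    by (simp add: ZGamma_def L_add fun_eq_iff)
qed

theorem lemma3:
  fixes N :: nat and a b :: int
  assumes "odd N" and "N > 0"
  shows "\<exists>H. subgroup H (sandpile_group (square_domain a b N)) \<and>
             (sandpile_group (square_domain a b N))\<lparr>carrier := H\<rparr>
               \<cong> integer_mod_group ((N + 1) div 2)"
proof -
  define G where "G = square_domain a b N"
  define m :: nat where "m = (N + 1) div 2"
  have m2: "int N + 1 = 2 * int m" using assms(1) by (auto simp: m_def elim!: oddE)
  have mpos: "m > 0" using m2 by simp
  define Z where "Z = ZGamma G"
  define I where "I = L G ` carrier Z"
  have fG: "finite G" by (simp add: G_def finite_square)
  define p where "p = (a, b)"
  have pG: "p \<in> G" using assms(2) by (simp add: G_def p_def square_domain_def)
  have cZ: "f \<in> carrier Z \<longleftrightarrow> (\<forall>v. v \<notin> G \<longrightarrow> f v = 0)" for f by (simp add: Z_def ZGamma_def)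
  have multZ: "f \<otimes>\<^bsub>Z\<^esub> g = (\<lambda>v. f v + g v)" for f g by (simp add: Z_def ZGamma_def)
  have Zc: "comm_group Z" unfolding Z_def by (rule ZGamma_comm_group)
  then have Zg: "group Z" by (rule comm_group.axioms)
  have ghom: "group_hom Z Z (L G)"
    using Zg L_hom unfolding Z_def by (simp add: group_hom_def group_hom_axioms_def)
  have Isub: "subgroup I Z" unfolding I_def by (rule group_hom.img_is_subgroup[OF ghom])
  have Inorm: "I \<lhd> Z" by (rule comm_group.subgroup_imp_normal[OF Zc Isub])
  have Iadd: "(\<lambda>v. f1 v + f2 v) \<in> I" if f12: "f1 \<in> I" "f2 \<in> I" for f1 f2
  proof -
    obtain h1 h2 where h: "h1 \<in> carrier Z" "h2 \<in> carrier Z" "f1 = L G h1" "f2 = L G h2"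
      using f12 by (auto simp: I_def)
    have "(\<lambda>v. f1 v + f2 v) = L G (\<lambda>v. h1 v + h2 v)" using h by (simp add: L_add fun_eq_iff)
    moreover have "(\<lambda>v. h1 v + h2 v) \<in> carrier Z" using h by (simp add: cZ)
    ultimately show ?thesis by (simp add: I_def)
  qed
  have Ismult: "(\<lambda>v. k * f v) \<in> I" if fI: "f \<in> I" for f k
  proof -
    obtain h where h: "h \<in> carrier Z" "f = L G h" using fI by (auto simp: I_def)
    have "(\<lambda>v. k * f v) = L G (\<lambda>v. k * h v)" using h by (simp add: L_smult fun_eq_iff)
    moreover have "(\<lambda>v. k * h v) \<in> carrier Z" using h by (simp add: cZ)
    ultimately show ?thesis by (simp add: I_def)
  qed
  define P where "P k \<longleftrightarrow> (\<lambda>v. k * dlt p v) \<in> I" for k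
  obtain D g0 where D: "D > 0" "\<forall>v. v \<notin> G \<longrightarrow> g0 v = 0" "L G g0 = (\<lambda>q. D * dlt p q)"
    using exists_D[OF fG pG] by blast
  have g0Z: "g0 \<in> carrier Z" using D(2) cZ by metis
  have "(\<lambda>v. D * dlt p v) \<in> I" unfolding I_def using g0Z D(3) by (metis image_eqI)
  then have PD: "P (int (nat D))" using D(1) by (simp add: P_def)
  define d :: nat where "d = (LEAST d::nat. d > 0 \<and> P (int d))"
  have dP: "d > 0 \<and> P (int d)" unfolding d_def
    by (rule LeastI[of _ "nat D"]) (use D PD in auto)
  have dmin: "\<not> P (int k)" if "0 < k" "k < d" for k
    using not_less_Least[of k "\<lambda>d. d > 0 \<and> P (int d)"] that unfolding d_def by auto
  have Pdvd: "int d dvd k" if Pk: "P k" for k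
  proof -
    define r where "r = k mod int d"
    have r: "0 \<le> r" "r < int d" using dP by (auto simp: r_def)
    have "(\<lambda>v. r * dlt p v) = (\<lambda>v. k * dlt p v + (- (k div int d)) * (int d * dlt p v))"
      by (simp add: r_def fun_eq_iff algebra_simps mod_div_mult_eq[symmetric] minus_div_mult_eq_mod[symmetric])
    also have "\<dots> \<in> I"
    proof -
      have A1: "(\<lambda>v. k * dlt p v) \<in> I" using Pk by (simp add: P_def)
      have "(\<lambda>v. int d * dlt p v) \<in> I" using dP by (simp add: P_def)
      then have A2: "(\<lambda>v. (- (k div int d)) * (int d * dlt p v)) \<in> I" by (rule Ismult)
      show ?thesis using Iadd[OF A1 A2] .
    qed
    finally have "P r" by (simp add: P_def)
    have "r = 0"
    proof (rule ccontr)
      assume "r \<noteq> 0"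
      then have "0 < nat r" "nat r < d" using r by linarith+
      moreover have "P (int (nat r))" using \<open>P r\<close> r by simp
      ultimately show False using dmin by blast
    qed
    then show ?thesis by (simp add: r_def dvd_eq_mod_eq_0)
  qed
  have mdvd: "int m dvd int d"
  proof -
    obtain h where h: "h \<in> carrier Z" "(\<lambda>v. int d * dlt p v) = L G h"
      using dP by (auto simp: P_def I_def)
    have "int m dvd (\<Sum>v\<in>G. cfun a b v * L G h v)"
      using functional_dvd[OF m2, where g=h and a=a and b=b] h(1) by (simp add: G_def cZ)
    also have "(\<Sum>v\<in>G. cfun a b v * L G h v) = (\<Sum>v\<in>G. if v = p then int d * cfun a b v else 0)"
      by (rule sum.cong[OF refl]) (simp add: h(2)[symmetric] dlt_def)
    also have "\<dots> = int d" using fG pG by (simp add: sum.delta' cfun_def p_def)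
    finally show ?thesis .
  qed
  obtain q where dq: "int d = int m * q" using mdvd by (auto simp: dvd_def)
  have "0 < int m * q" using dq dP by simp
  then have qpos: "q > 0" using mpos by (simp add: zero_less_mult_iff)
  define x where "x = (\<lambda>v. q * dlt p v)"
  have xZ: "(\<lambda>v. k * x v) \<in> carrier Z" for k
    unfolding cZ x_def dlt_def using pG by auto
  have mx: "(\<lambda>v. k * (int m * x v)) \<in> I" for k
  proof -
    have "(\<lambda>v. int m * x v) = (\<lambda>v. int d * dlt p v)" by (simp add: x_def dq fun_eq_iff)
    then have "(\<lambda>v. int m * x v) \<in> I" using dP by (simp add: P_def)
    then show ?thesis by (rule Ismult)
  qed
  have xinj: "int m dvd k" if "(\<lambda>v. k * x v) \<in> I" for k
  proof -
    have "P (k * q)" using that by (simp add: P_def x_def mult.assoc)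
    then have "int d dvd k * q" by (rule Pdvd)
    then have "int m * q dvd k * q" using dq by simp
    then show ?thesis using qpos by (simp add: mult.commute[of _ q])
  qed
  have cosI: "I #>\<^bsub>Z\<^esub> (h \<otimes>\<^bsub>Z\<^esub> y) = I #>\<^bsub>Z\<^esub> y" if "h \<in> I" "y \<in> carrier Z" for h y
  proof -
    have hZ: "h \<in> carrier Z" using that Isub subgroup.subset by blast
    have "I #>\<^bsub>Z\<^esub> (h \<otimes>\<^bsub>Z\<^esub> y) = (I #>\<^bsub>Z\<^esub> h) #>\<^bsub>Z\<^esub> y"
      using group.coset_mult_assoc[OF Zg subgroup.subset[OF Isub] hZ that(2)] by simp
    also have "I #>\<^bsub>Z\<^esub> h = I" by (rule subgroup.rcos_const[OF Isub Zg that(1)])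
    finally show ?thesis .
  qed
  define psi where "psi k = I #>\<^bsub>Z\<^esub> (\<lambda>v. k * x v)" for k
  define Zm where "Zm = integer_mod_group m"
  have cZm: "carrier Zm = {0..<int m}" using mpos by (simp add: Zm_def carrier_integer_mod_group)
  have psi_car: "psi k \<in> carrier (Z Mod I)" for k
    unfolding carrier_FactGroup psi_def using xZ by blast
  have psi_hom: "psi \<in> hom Zm (Z Mod I)"
    unfolding hom_def
  proof (intro CollectI conjI ballI)
    show "psi \<in> carrier Zm \<rightarrow> carrier (Z Mod I)" using psi_car by blast
    fix k l assume "k \<in> carrier Zm" "l \<in> carrier Zm"
    have "psi k \<otimes>\<^bsub>Z Mod I\<^esub> psi l = I #>\<^bsub>Z\<^esub> ((\<lambda>v. k * x v) \<otimes>\<^bsub>Z\<^esub> (\<lambda>v. l * x v))"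
      unfolding psi_def mult_FactGroup by (rule normal.rcos_sum[OF Inorm xZ xZ])
    also have "(\<lambda>v. k * x v) \<otimes>\<^bsub>Z\<^esub> (\<lambda>v. l * x v)
        = (\<lambda>v. ((k + l) div int m) * (int m * x v)) \<otimes>\<^bsub>Z\<^esub> (\<lambda>v. ((k + l) mod int m) * x v)"
    proof -
      have "k * x v + l * x v = (k + l) div int m * (int m * x v) + (k + l) mod int m * x v" for v
      proof -
        have "(k + l) div int m * (int m * x v) + (k + l) mod int m * x v
            = ((k + l) div int m * int m + (k + l) mod int m) * x v" by (simp only: distrib_right mult.assoc)
        also have "\<dots> = (k + l) * x v" by (simp only: div_mult_mod_eq)
        finally have F: "(k + l) div int m * (int m * x v) + (k + l) mod int m * x v = (k + l) * x v" .
        show ?thesis unfolding distrib_right[symmetric] using F by (rule sym)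
      qed
      then show ?thesis unfolding multZ by (simp add: fun_eq_iff)
    qed
    also have "I #>\<^bsub>Z\<^esub> \<dots> = psi ((k + l) mod int m)"
      unfolding psi_def by (rule cosI[OF mx xZ])
    finally show "psi (k \<otimes>\<^bsub>Zm\<^esub> l) = psi k \<otimes>\<^bsub>Z Mod I\<^esub> psi l"
      by (simp add: Zm_def)
  qed
  have psi_inj: "inj_on psi (carrier Zm)"
  proof (rule inj_onI)
    fix k l assume k: "k \<in> carrier Zm" and l: "l \<in> carrier Zm" and e: "psi k = psi l"
    have "(\<lambda>v. k * x v) \<in> psi k"
      unfolding psi_def by (rule group.rcos_self[OF Zg xZ Isub])
    then have "(\<lambda>v. k * x v) \<in> psi l" using e by simp
    then obtain h where h: "h \<in> I" "(\<lambda>v. k * x v) = h \<otimes>\<^bsub>Z\<^esub> (\<lambda>v. l * x v)"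
      unfolding psi_def r_coset_def by blast
    have "h = (\<lambda>v. (k - l) * x v)" using h(2) by (simp add: multZ fun_eq_iff algebra_simps)
    then have "int m dvd (k - l)" using h(1) xinj by simp
    then have "k mod int m = l mod int m" by (simp add: mod_eq_dvd_iff)
    moreover have "k mod int m = k" "l mod int m = l" using k l cZm by auto
    ultimately show "k = l" by simp
  qed
  have Zmg: "group Zm" by (simp add: Zm_def)
  have FG: "group (Z Mod I)" by (rule normal.factorgroup_is_group[OF Inorm])
  have ghom2: "group_hom Zm (Z Mod I) psi"
    using Zmg FG psi_hom by (simp add: group_hom_def group_hom_axioms_def)
  define H where "H = psi ` carrier Zm"
  have Hsub: "subgroup H (Z Mod I)" unfolding H_def by (rule group_hom.img_is_subgroup[OF ghom2])
  have "psi \<in> iso Zm ((Z Mod I)\<lparr>carrier := H\<rparr>)"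
    unfolding iso_iff
  proof (intro conjI)
    show "psi \<in> hom Zm ((Z Mod I)\<lparr>carrier := H\<rparr>)"
      using psi_hom unfolding hom_def H_def by auto
  qed (use psi_inj H_def in auto)
  then have "Zm \<cong> (Z Mod I)\<lparr>carrier := H\<rparr>" by (rule is_isoI)
  then have iso: "(Z Mod I)\<lparr>carrier := H\<rparr> \<cong> Zm" by (rule group.iso_sym[OF Zmg])
  have "sandpile_group (square_domain a b N) = Z Mod I"
    by (simp add: sandpile_group_def Z_def I_def G_def)
  then show ?thesis using Hsub iso m_def Zm_def by auto
qed

end
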